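(* Let $\alpha$ be an equidistributed infinite permutation. Then for every positive integer $N$, $\alpha$ has an $N$-maximal element and an $N$-minimal element.
   Context: An infinite permutation is an equivalence class of sequences $(a[n])_{n\ge0}$ of pairwise distinct reals, where two sequences are equivalent if $a[i]<a[j]\iff b[i]<b[j]$ for all $i,j$; write $\alpha=(\alpha[n])_{n\ge0}$ with the induced order. A sequence $(a[n])$ in $[0,1]$ is equidistributed if $\lim_{n\to\infty}\frac{\#\{0\le i<n:a[i]<t\}}{n}=t$ for each $t\in[0,1]$; a permutation is equidistributed if it has an equidistributed representative in $[0,1]$. An element $\alpha[i]$ with $i>N$ is $N$-maximal (resp. $N$-minimal) if $\alpha[i]>\alpha[j]$ (resp. $\alpha[i]<\alpha[j]$) for all $j\in\{i-N,\dots,i+N\}\setminus\{i\}$. *)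

theory Defs
  imports "HOL-Analysis.Analysis"
begin

text \<open>An infinite permutation is represented by any representative sequence
  of pairwise distinct reals; two representatives are equivalent iff they
  induce the same order on indices.\<close>

definition distinct_seq :: "(nat \<Rightarrow> real) \<Rightarrow> bool" where
  "distinct_seq a \<longleftrightarrow> inj a"

definition perm_equiv :: "(nat \<Rightarrow> real) \<Rightarrow> (nat \<Rightarrow> real) \<Rightarrow> bool" where
  "perm_equiv a b \<longleftrightarrow> (\<forall>i j. a i < a j \<longleftrightarrow> b i < b j)"

definition equidistributed_seq :: "(nat \<Rightarrow> real) \<Rightarrow> bool" where
  "equidistributed_seq a \<longleftrightarrow> (\<forall>n. a n \<in> {0..1}) \<and>
     (\<forall>t\<in>{0..1}. (\<lambda>n. real (card {i. i < n \<and> a i < t}) / real n) \<longlonglongrightarrow> t)"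

definition equidistributed_perm :: "(nat \<Rightarrow> real) \<Rightarrow> bool" where
  "equidistributed_perm a \<longleftrightarrow>
     (\<exists>b. distinct_seq b \<and> perm_equiv a b \<and> equidistributed_seq b)"

definition N_maximal :: "nat \<Rightarrow> (nat \<Rightarrow> real) \<Rightarrow> nat \<Rightarrow> bool" where
  "N_maximal N a i \<longleftrightarrow> i > N \<and>
     (\<forall>j\<in>{i - N..i + N} - {i}. a i > a j)"

definition N_minimal :: "nat \<Rightarrow> (nat \<Rightarrow> real) \<Rightarrow> nat \<Rightarrow> bool" where
  "N_minimal N a i \<longleftrightarrow> i > N \<and>
     (\<forall>j\<in>{i - N..i + N} - {i}. a i < a j)"

end

theory Submission
  imports Defs
begin

lemma exists_max:
  fixes b :: "nat \<Rightarrow> real" and N :: nat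
  assumes inj: "inj b"
    and inf: "\<And>K. \<exists>i\<ge>K. P i"
    and gap: "\<And>K. \<exists>g\<ge>K. \<forall>j\<in>{g..<g+N}. \<not> P j"
    and ord: "\<And>i j. P i \<Longrightarrow> \<not> P j \<Longrightarrow> b j < b i"
  shows "\<exists>i. N_maximal N b i"
proof -
  obtain g1 where g1: "g1 \<ge> N+1" "\<forall>j\<in>{g1..<g1+N}. \<not> P j" using gap by blast
  obtain a where a: "a \<ge> g1 + N" "P a" using inf by blast
  obtain g2 where g2: "g2 \<ge> a+1" "\<forall>j\<in>{g2..<g2+N}. \<not> P j" using gap by blast
  define F where "F = {i. g1+N \<le> i \<and> i < g2 \<and> P i}"
  have fin: "finite F" unfolding F_def by (rule finite_subset[of _ "{..<g2}"]) auto
  have aF: "a \<in> F" using a g2 unfolding F_def by auto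
  have "Max (b ` F) \<in> b ` F" using fin aF by (intro Max_in) auto
  then obtain p where pF: "p \<in> F" and pm: "b p = Max (b ` F)" by auto
  have le: "\<And>q. q \<in> F \<Longrightarrow> b q \<le> b p" using fin pm by simp
  have pP: "P p" and p1: "g1 + N \<le> p" and p2: "p < g2" using pF unfolding F_def by auto
  show ?thesis
  proof (intro exI[of _ p])
    show "N_maximal N b p"
      unfolding N_maximal_def
    proof (intro conjI ballI)
      show "p > N" using p1 g1 by simp
    next
      fix j assume j: "j \<in> {p - N..p + N} - {p}"
      show "b j < b p"
      proof (cases "P j")
        case True
        have "j \<ge> g1 + N"
        proof (rule ccontr)
          assume "\<not> j \<ge> g1 + N"
          then have "j \<in> {g1..<g1+N}" using j p1 by auto
          then show False using g1 True by auto
        qed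
        moreover have "j < g2"
        proof (rule ccontr)
          assume "\<not> j < g2"
          then have "j \<in> {g2..<g2+N}" using j p2 by auto
          then show False using g2 True by auto
        qed
        ultimately have "j \<in> F" using True unfolding F_def by auto
        then have "b j \<le> b p" by (rule le)
        moreover have "b j \<noteq> b p" using inj j by (auto dest: injD)
        ultimately show ?thesis by simp
      next
        case False
        then show ?thesis using ord pP by blast
      qed
    qed
  qed
qed

lemma count_lb:
  fixes N K :: nat
  assumes "\<And>g. g \<ge> K \<Longrightarrow> \<exists>j\<in>{g..<g+N}. P j"
  shows "k \<le> card {i. i < K + k*N \<and> P i}"
proof (induction k)
  case 0 then show ?case by simp
next
  case (Suc k)
  obtain j where j: "j \<in> {K+k*N..<K+k*N+N}" "P j" using assms[of "K+k*N"] by auto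
  have sub: "insert j {i. i < K + k*N \<and> P i} \<subseteq> {i. i < K + Suc k*N \<and> P i}"
    using j by auto
  have "card (insert j {i. i < K + k*N \<and> P i}) = Suc (card {i. i < K + k*N \<and> P i})"
    using j by (subst card_insert_disjoint) auto
  moreover have "card (insert j {i. i < K + k*N \<and> P i}) \<le> card {i. i < K + Suc k*N \<and> P i}"
    by (rule card_mono[OF _ sub]) auto
  ultimately show ?case using Suc by simp
qed

lemma inf_ge:
  fixes b :: "nat \<Rightarrow> real"
  assumes E: "equidistributed_seq b" and t: "0 \<le> t" "t < 1"
  shows "\<exists>i\<ge>K. t \<le> b i"
proof (rule ccontr)
  assume "\<not> ?thesis"
  then have lt: "\<And>i. i \<ge> K \<Longrightarrow> b i < t" by (meson not_le)
  have lim: "(\<lambda>n. real (card {i. i < n \<and> b i < t}) / real n) \<longlonglongrightarrow> t"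
    using E t unfolding equidistributed_seq_def by auto
  have lim1: "(\<lambda>n. 1 - real K / real n) \<longlonglongrightarrow> 1"
    using tendsto_diff[OF tendsto_const lim_const_over_n[of "real K"]] by simp
  have "\<forall>n\<ge>K+1. 1 - real K / real n \<le> real (card {i. i < n \<and> b i < t}) / real n"
  proof (intro allI impI)
    fix n assume n: "n \<ge> K+1"
    have "{K..<n} \<subseteq> {i. i < n \<and> b i < t}" using lt by auto
    then have "card {K..<n} \<le> card {i. i < n \<and> b i < t}" by (intro card_mono) auto
    then have c: "real n - real K \<le> real (card {i. i < n \<and> b i < t})" using n by simp
    have "1 - real K / real n = (real n - real K) / real n" using n by (simp add: field_simps)
    also have "\<dots> \<le> real (card {i. i < n \<and> b i < t}) / real n"
      using c n by (intro divide_right_mono) auto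
    finally show "1 - real K / real n \<le> real (card {i. i < n \<and> b i < t}) / real n" .
  qed
  then have "1 \<le> t" using LIMSEQ_le[OF lim1 lim] by blast
  then show False using t by simp
qed

lemma inf_lt:
  fixes b :: "nat \<Rightarrow> real"
  assumes E: "equidistributed_seq b" and s: "0 < s" "s \<le> 1"
  shows "\<exists>i\<ge>K. b i < s"
proof (rule ccontr)
  assume "\<not> ?thesis"
  then have ge: "\<And>i. i \<ge> K \<Longrightarrow> \<not> b i < s" by blast
  have lim: "(\<lambda>n. real (card {i. i < n \<and> b i < s}) / real n) \<longlonglongrightarrow> s"
    using E s unfolding equidistributed_seq_def by auto
  have lim0: "(\<lambda>n. real K / real n) \<longlonglongrightarrow> 0" by (rule lim_const_over_n)
  have "\<forall>n\<ge>K+1. real (card {i. i < n \<and> b i < s}) / real n \<le> real K / real n"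
  proof (intro allI impI)
    fix n assume n: "n \<ge> K+1"
    have "{i. i < n \<and> b i < s} \<subseteq> {..<K}"
    proof
      fix i assume "i \<in> {i. i < n \<and> b i < s}"
      then show "i \<in> {..<K}" using ge[of i] by (cases "K \<le> i") auto
    qed
    then have "card {i. i < n \<and> b i < s} \<le> card {..<K}" by (intro card_mono) auto
    then show "real (card {i. i < n \<and> b i < s}) / real n \<le> real K / real n"
      using n by (intro divide_right_mono) auto
  qed
  then have "s \<le> 0" using LIMSEQ_le[OF lim lim0] by blast
  then show False using s by simp
qed

lemma ratio_aux:
  fixes N K k :: nat
  assumes "N > 0" "K \<le> k * N" "k > 0"
  shows "real k / real (K + k*N) \<ge> 1 / (2 * real N)"
proof -
  have "real (K + k*N) \<le> 2 * real N * real k" using assms(2)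
    by (simp add: algebra_simps) (metis of_nat_le_iff of_nat_mult)
  show ?thesis
  proof (cases "K + k*N = 0")
    case True then show ?thesis using assms by simp
  next
    case False
    then have pos: "real (K + k*N) > 0" by (simp only: of_nat_0_less_iff)
    have Np: "real N > 0" using assms(1) by simp
    have "1 / (2 * real N) = real (K + k*N) / (2 * real N) / real (K + k*N)" using pos by simp
    also have "\<dots> \<le> real k / real (K + k*N)"
      using \<open>real (K + k*N) \<le> 2 * real N * real k\<close> pos Np
      by (intro divide_right_mono) (auto simp: divide_le_eq mult.commute)
    finally show ?thesis .
  qed
qed

lemma gap_ge:
  fixes b :: "nat \<Rightarrow> real" and N :: nat
  assumes E: "equidistributed_seq b" and N: "N > 0"
  defines "t \<equiv> 1 - 1 / (4 * real N)"
  shows "\<exists>g\<ge>K. \<forall>j\<in>{g..<g+N}. \<not> t \<le> b j"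
proof (rule ccontr)
  assume "\<not> ?thesis"
  then have h: "\<And>g. g \<ge> K \<Longrightarrow> \<exists>j\<in>{g..<g+N}. t \<le> b j" by blast
  have t01: "0 \<le> t" "t \<le> 1" using N unfolding t_def by (auto simp: field_simps)
  have lim: "(\<lambda>n. real (card {i. i < n \<and> b i < t}) / real n) \<longlonglongrightarrow> t"
    using E t01 unfolding equidistributed_seq_def by auto
  have sm: "strict_mono (\<lambda>k. K + k*N)" using N by (auto simp: strict_mono_def)
  have lim2: "(\<lambda>k. real (card {i. i < K + k*N \<and> b i < t}) / real (K + k*N)) \<longlonglongrightarrow> t"
    using LIMSEQ_subseq_LIMSEQ[OF lim sm] by (simp add: o_def)
  have "\<forall>k\<ge>K+1. real (card {i. i < K + k*N \<and> b i < t}) / real (K + k*N) \<le> 1 - 1 / (2 * real N)"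
  proof (intro allI impI)
    fix k assume k1: "k \<ge> K+1"
    then have k: "k \<ge> K" and kp: "k > 0" by auto
    define n where "n = K + k*N"
    have "k \<le> k * N" using N by simp
    then have kN: "K \<le> k * N" using k by (rule le_trans[rotated])
    have c1: "k \<le> card {i. i < n \<and> t \<le> b i}" unfolding n_def by (rule count_lb) (use h in auto)
    have split: "card {i. i < n \<and> b i < t} + card {i. i < n \<and> t \<le> b i} = n"
    proof -
      have "card {i. i < n \<and> b i < t} + card {i. i < n \<and> t \<le> b i}
          = card ({i. i < n \<and> b i < t} \<union> {i. i < n \<and> t \<le> b i})"
        by (rule card_Un_disjoint[symmetric]) auto
      also have "{i. i < n \<and> b i < t} \<union> {i. i < n \<and> t \<le> b i} = {..<n}" by auto
      finally show ?thesis by simp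
    qed
    have "card {i. i < n \<and> b i < t} + k \<le> n" using split c1 by linarith
    then have "real (card {i. i < n \<and> b i < t} + k) \<le> real n" by (rule of_nat_mono)
    then have c: "real (card {i. i < n \<and> b i < t}) \<le> real n - real k" by simp
    have r: "real k / real n \<ge> 1 / (2 * real N)" unfolding n_def using ratio_aux[OF N kN kp] .
    show "real (card {i. i < K + k*N \<and> b i < t}) / real (K + k*N) \<le> 1 - 1 / (2 * real N)"
    proof (cases "n = 0")
      case True then show ?thesis using N n_def by simp
    next
      case False
      then have np: "real n > 0" by simp
      have "real (card {i. i < n \<and> b i < t}) / real n \<le> (real n - real k) / real n"
        using c np by (intro divide_right_mono) auto
      also have "\<dots> = 1 - real k / real n" using np by (simp add: field_simps)
      also have "\<dots> \<le> 1 - 1 / (2 * real N)" using r by simp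
      finally show ?thesis unfolding n_def .
    qed
  qed
  then have "t \<le> 1 - 1 / (2 * real N)" using LIMSEQ_le_const2[OF lim2] by blast
  then show False using N unfolding t_def by (simp add: field_simps)
qed

lemma gap_lt:
  fixes b :: "nat \<Rightarrow> real" and N :: nat
  assumes E: "equidistributed_seq b" and N: "N > 0"
  defines "s \<equiv> 1 / (4 * real N)"
  shows "\<exists>g\<ge>K. \<forall>j\<in>{g..<g+N}. \<not> b j < s"
proof (rule ccontr)
  assume "\<not> ?thesis"
  then have h: "\<And>g. g \<ge> K \<Longrightarrow> \<exists>j\<in>{g..<g+N}. b j < s" by blast
  have s01: "0 \<le> s" "s \<le> 1" using N unfolding s_def by (auto simp: field_simps)
  have lim: "(\<lambda>n. real (card {i. i < n \<and> b i < s}) / real n) \<longlonglongrightarrow> s"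
    using E s01 unfolding equidistributed_seq_def by auto
  have sm: "strict_mono (\<lambda>k. K + k*N)" using N by (auto simp: strict_mono_def)
  have lim2: "(\<lambda>k. real (card {i. i < K + k*N \<and> b i < s}) / real (K + k*N)) \<longlonglongrightarrow> s"
    using LIMSEQ_subseq_LIMSEQ[OF lim sm] by (simp add: o_def)
  have "\<forall>k\<ge>K+1. 1 / (2 * real N) \<le> real (card {i. i < K + k*N \<and> b i < s}) / real (K + k*N)"
  proof (intro allI impI)
    fix k assume k1: "k \<ge> K+1"
    then have k: "k \<ge> K" and kp: "k > 0" by auto
    define n where "n = K + k*N"
    have "k \<le> k * N" using N by simp
    then have kN: "K \<le> k * N" using k by (rule le_trans[rotated])
    have c1: "k \<le> card {i. i < n \<and> b i < s}" unfolding n_def by (rule count_lb) (use h in auto)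
    have r: "real k / real n \<ge> 1 / (2 * real N)" unfolding n_def using ratio_aux[OF N kN kp] .
    also have "real k / real n \<le> real (card {i. i < n \<and> b i < s}) / real n"
      using c1 by (intro divide_right_mono) auto
    finally show "1 / (2 * real N) \<le> real (card {i. i < K + k*N \<and> b i < s}) / real (K + k*N)"
      unfolding n_def .
  qed
  then have "1 / (2 * real N) \<le> s" using LIMSEQ_le_const[OF lim2] by blast
  then show False using N unfolding s_def by (simp add: field_simps)
qed

theorem proposition2:
  fixes a :: "nat \<Rightarrow> real" and N :: nat
  assumes "distinct_seq a"
    and "equidistributed_perm a"
    and "N > 0"
  shows "(\<exists>i. N_maximal N a i) \<and> (\<exists>i. N_minimal N a i)"
proof -
  obtain b where db: "distinct_seq b" and pe: "perm_equiv a b" and E: "equidistributed_seq b"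
    using assms(2) unfolding equidistributed_perm_def by blast
  have inj: "inj b" using db unfolding distinct_seq_def .
  have ord: "\<And>i j. a i < a j \<longleftrightarrow> b i < b j" using pe unfolding perm_equiv_def by blast
  define t where "t = 1 - 1 / (4 * real N)"
  have t01: "0 \<le> t" "t < 1" using assms(3) unfolding t_def by (auto simp: field_simps)
  have "\<exists>i. N_maximal N b i"
    by (rule exists_max[where P = "\<lambda>i. t \<le> b i"])
       (use inj inf_ge[OF E t01] gap_ge[OF E assms(3)] in \<open>auto simp: t_def\<close>)
  then obtain i where i: "N_maximal N b i" by blast
  have "N_maximal N a i" using i ord unfolding N_maximal_def by auto
  define s where "s = 1 / (4 * real N)"
  have s01: "0 < s" "s \<le> 1" using assms(3) unfolding s_def by (auto simp: field_simps)
  have inj': "inj (\<lambda>i. - b i)" using inj by (auto simp: inj_def)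
  have "\<exists>i. N_maximal N (\<lambda>i. - b i) i"
    by (rule exists_max[where P = "\<lambda>i. b i < s"])
       (use inj' inf_lt[OF E s01] gap_lt[OF E assms(3)] in \<open>auto simp: s_def\<close>)
  then obtain k where k: "N_maximal N (\<lambda>i. - b i) k" by blast
  have "N_minimal N a k" using k ord unfolding N_maximal_def N_minimal_def by auto
  with \<open>N_maximal N a i\<close> show ?thesis by blast
qed

end
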